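(* Let $N,q,L\in\mathbb{N}_{\ge1}$, $0<\varepsilon\le\frac1{2NL}$, and let $s\in S=\frac1{NL}\{0,\dots,L-1\}^n$ satisfy $H(\varepsilon)\cap G(s)=\emptyset$, where $G(s)=\{s+\frac1Nv:v\in\{0,\dots,qN-1\}^n\}$. Let $H_{\mathrm{bound}}=(-\frac1N,0]^n+H$. Then $$\frac{|G(s)\setminus H_{\mathrm{bound}}|}{|G(s)|}\ge 1-\frac1N\cdot\frac{nD(q+1+A+C)^n(A+2/N)^{n-1}}{(Cq)^n}.$$
   Context: An $n$-dimensional infrastructure consists of a full-rank lattice $\Lambda\subset\mathbb{R}^n$, a finite non-empty set $X$, an injective map $d:X\to\mathbb{R}^n/\Lambda$, and a set $\mathrm{fRep}\subseteq X\times\mathbb{R}^n$ with $X\times\{0\}\subseteq\mathrm{fRep}$ such that $\Phi:\mathrm{fRep}\to\mathbb{R}^n/\Lambda$, $(x,t)\mapsto d(x)+t$, is a bijection. Let $\pi:\mathbb{R}^n\to\mathbb{R}^n/\Lambda$ be the projection, $\hat X=\pi^{-1}(d(X))$, and for $\hat x\in\hat X$ let $\hat V_{\hat x}=\{\hat x+t:(d^{-1}(\pi(\hat x)),t)\in\mathrm{fRep}\}$; these sets partition $\mathbb{R}^n$. Standing assumptions: the infrastructure is cornered (for each $\hat x$, $\hat x\in\hat V_{\hat x}$ and $\{r:\hat x\le r\le t\}\subseteq\hat V_{\hat x}$ for all $t\in\hat V_{\hat x}$, componentwise order); (A1) there is $A>0$ with $\hat V_{\hat x}\subseteq\hat x+[0,A]^n$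 for all $\hat x$; (A2) there are $C,D>0$ such that $(r+[0,C]^n)\cap\hat X$ has at most $D$ elements for every $r\in\mathbb{R}^n$. $H=\bigcup_{\hat x\in\hat X}\partial\hat V_{\hat x}$ (topological boundaries) and $H(\varepsilon)=H+[-\varepsilon,\varepsilon]^n$. *)

theory Defs
  imports "HOL-Analysis.Analysis"
begin

definition full_rank_lattice :: "(real^'n) set \<Rightarrow> bool" where
  "full_rank_lattice \<Lambda> \<longleftrightarrow>
     (\<exists>B::real^'n^'n. invertible B \<and>
        \<Lambda> = {B *v (\<chi> i. real_of_int (k i)) | k :: 'n \<Rightarrow> int. True})"

text \<open>Points of R^n/Lambda are represented by representatives; equality in the quotient
  is congruence modulo Lambda.\<close>
definition infrastructure ::
  "(real^'n) set \<Rightarrow> 'x set \<Rightarrow> ('x \<Rightarrow> real^'n) \<Rightarrow> ('x \<times> (real^'n)) set \<Rightarrow> bool" where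
  "infrastructure \<Lambda> X d fRep \<longleftrightarrow>
     full_rank_lattice \<Lambda> \<and> finite X \<and> X \<noteq> {} \<and>
     (\<forall>x\<in>X. \<forall>y\<in>X. d x - d y \<in> \<Lambda> \<longrightarrow> x = y) \<and>
     fRep \<subseteq> X \<times> UNIV \<and> X \<times> {0} \<subseteq> fRep \<and>
     (\<forall>r. \<exists>p\<in>fRep. d (fst p) + snd p - r \<in> \<Lambda>) \<and>
     (\<forall>p\<in>fRep. \<forall>p'\<in>fRep. d (fst p) + snd p - (d (fst p') + snd p') \<in> \<Lambda> \<longrightarrow> p = p')"

definition Xhat :: "(real^'n) set \<Rightarrow> 'x set \<Rightarrow> ('x \<Rightarrow> real^'n) \<Rightarrow> (real^'n) set" where
  "Xhat \<Lambda> X d = {p. \<exists>x\<in>X. p - d x \<in> \<Lambda>}"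

definition xof :: "(real^'n) set \<Rightarrow> 'x set \<Rightarrow> ('x \<Rightarrow> real^'n) \<Rightarrow> real^'n \<Rightarrow> 'x" where
  "xof \<Lambda> X d p = (THE x. x \<in> X \<and> p - d x \<in> \<Lambda>)"

definition Vhat :: "(real^'n) set \<Rightarrow> 'x set \<Rightarrow> ('x \<Rightarrow> real^'n) \<Rightarrow> ('x \<times> (real^'n)) set
                    \<Rightarrow> real^'n \<Rightarrow> (real^'n) set" where
  "Vhat \<Lambda> X d fRep p = {p + t | t. (xof \<Lambda> X d p, t) \<in> fRep}"

definition cornered :: "(real^'n) set \<Rightarrow> 'x set \<Rightarrow> ('x \<Rightarrow> real^'n) \<Rightarrow> ('x \<times> (real^'n)) set \<Rightarrow> bool" where
  "cornered \<Lambda> X d fRep \<longleftrightarrow>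
     (\<forall>p\<in>Xhat \<Lambda> X d. p \<in> Vhat \<Lambda> X d fRep p \<and>
        (\<forall>t\<in>Vhat \<Lambda> X d fRep p. {r. (\<forall>i. p$i \<le> r$i \<and> r$i \<le> t$i)} \<subseteq> Vhat \<Lambda> X d fRep p))"

definition assumption_A1 :: "(real^'n) set \<Rightarrow> 'x set \<Rightarrow> ('x \<Rightarrow> real^'n) \<Rightarrow> ('x \<times> (real^'n)) set \<Rightarrow> real \<Rightarrow> bool" where
  "assumption_A1 \<Lambda> X d fRep A \<longleftrightarrow> A > 0 \<and>
     (\<forall>p\<in>Xhat \<Lambda> X d. Vhat \<Lambda> X d fRep p \<subseteq> {p + u | u. \<forall>i. 0 \<le> u$i \<and> u$i \<le> A})"

definition assumption_A2 :: "(real^'n) set \<Rightarrow> 'x set \<Rightarrow> ('x \<Rightarrow> real^'n) \<Rightarrow> real \<Rightarrow> real \<Rightarrow> bool" where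
  "assumption_A2 \<Lambda> X d C D \<longleftrightarrow> C > 0 \<and> D > 0 \<and>
     (\<forall>r::real^'n. let Q = {r + u | u. \<forall>i. 0 \<le> u$i \<and> u$i \<le> C} \<inter> Xhat \<Lambda> X d
                   in finite Q \<and> real (card Q) \<le> D)"

definition Hset :: "(real^'n) set \<Rightarrow> 'x set \<Rightarrow> ('x \<Rightarrow> real^'n) \<Rightarrow> ('x \<times> (real^'n)) set \<Rightarrow> (real^'n) set" where
  "Hset \<Lambda> X d fRep = (\<Union>p\<in>Xhat \<Lambda> X d. frontier (Vhat \<Lambda> X d fRep p))"

definition Heps :: "(real^'n) set \<Rightarrow> 'x set \<Rightarrow> ('x \<Rightarrow> real^'n) \<Rightarrow> ('x \<times> (real^'n)) set \<Rightarrow> real \<Rightarrow> (real^'n) set" where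
  "Heps \<Lambda> X d fRep \<epsilon> = {h + u | h u. h \<in> Hset \<Lambda> X d fRep \<and> (\<forall>i. -\<epsilon> \<le> u$i \<and> u$i \<le> \<epsilon>)}"

definition Hbound :: "(real^'n) set \<Rightarrow> 'x set \<Rightarrow> ('x \<Rightarrow> real^'n) \<Rightarrow> ('x \<times> (real^'n)) set \<Rightarrow> nat \<Rightarrow> (real^'n) set" where
  "Hbound \<Lambda> X d fRep N = {u + h | u h. h \<in> Hset \<Lambda> X d fRep \<and> (\<forall>i. - 1 / real N < u$i \<and> u$i \<le> 0)}"

definition Sgrid :: "nat \<Rightarrow> nat \<Rightarrow> (real^'n) set" where
  "Sgrid N L = {(\<chi> i. real (k i) / (real N * real L)) | k :: 'n \<Rightarrow> nat. \<forall>i. k i < L}"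

definition Ggrid :: "nat \<Rightarrow> nat \<Rightarrow> real^'n \<Rightarrow> (real^'n) set" where
  "Ggrid N q s = {s + (\<chi> i. real (v i) / real N) | v :: 'n \<Rightarrow> nat. \<forall>i. v i < q * N}"

end

theory Submission
  imports Defs
begin


lemma lat_diff:
  fixes \<Lambda> :: "(real^'n) set"
  assumes "full_rank_lattice \<Lambda>" "a \<in> \<Lambda>" "b \<in> \<Lambda>" shows "a - b \<in> \<Lambda>"
proof -
  obtain B :: "real^'n^'n" where L: "\<Lambda> = {B *v (\<chi> i. real_of_int (k i)) | k :: 'n \<Rightarrow> int. True}"
    using assms(1) unfolding full_rank_lattice_def by blast
  obtain k l :: "'n \<Rightarrow> int" where a: "a = B *v (\<chi> i. real_of_int (k i))" and b: "b = B *v (\<chi> i. real_of_int (l i))"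
    using assms(2,3) L by blast
  have v: "(\<chi> i. real_of_int ((\<lambda>i. k i - l i) i)) = (\<chi> i. real_of_int (k i)) - (\<chi> i. real_of_int (l i))"
    by (simp add: vec_eq_iff)
  have "a - b = B *v (\<chi> i. real_of_int ((\<lambda>i. k i - l i) i))"
    unfolding a b v by (simp add: matrix_vector_mult_diff_distrib)
  then show ?thesis unfolding L by (intro CollectI exI[of _ "\<lambda>i. k i - l i"]) simp
qed

lemma lat_zero:
  fixes \<Lambda> :: "(real^'n) set"
  assumes "full_rank_lattice \<Lambda>" shows "0 \<in> \<Lambda>"
proof -
  obtain B :: "real^'n^'n" where L: "\<Lambda> = {B *v (\<chi> i. real_of_int (k i)) | k :: 'n \<Rightarrow> int. True}"
    using assms(1) unfolding full_rank_lattice_def by blast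
  have z: "(\<chi> i. real_of_int ((\<lambda>i. 0::int) i)) = (0::real^'n)"
    by (simp add: vec_eq_iff)
  have "(0::real^'n) = B *v (\<chi> i. real_of_int ((\<lambda>i. 0::int) i))"
    unfolding z by simp
  then show ?thesis unfolding L by (intro CollectI exI[of _ "\<lambda>i. 0::int"]) simp
qed

lemma lat_neg: fixes \<Lambda> :: "(real^'n) set" shows "full_rank_lattice \<Lambda> \<Longrightarrow> a \<in> \<Lambda> \<Longrightarrow> - a \<in> \<Lambda>"
  using lat_diff[of \<Lambda> 0 a] lat_zero by auto

lemma lat_add: fixes \<Lambda> :: "(real^'n) set" shows "full_rank_lattice \<Lambda> \<Longrightarrow> a \<in> \<Lambda> \<Longrightarrow> b \<in> \<Lambda> \<Longrightarrow> a + b \<in> \<Lambda>"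
  using lat_diff[of \<Lambda> a "-b"] lat_neg[of \<Lambda> b] by auto

lemma infraD:
  assumes "infrastructure \<Lambda> X d fRep"
  shows "full_rank_lattice \<Lambda>" "finite X" "X \<noteq> {}"
    "\<And>x y. x\<in>X \<Longrightarrow> y\<in>X \<Longrightarrow> d x - d y \<in> \<Lambda> \<Longrightarrow> x = y"
    "\<And>x t. (x,t) \<in> fRep \<Longrightarrow> x \<in> X"
    "\<And>r. \<exists>p\<in>fRep. d (fst p) + snd p - r \<in> \<Lambda>"
    "\<And>p p'. p\<in>fRep \<Longrightarrow> p'\<in>fRep \<Longrightarrow> d (fst p) + snd p - (d (fst p') + snd p') \<in> \<Lambda> \<Longrightarrow> p = p'"
  using assms unfolding infrastructure_def by blast+

lemma xof_eq:
  assumes inf: "infrastructure \<Lambda> X d fRep" and "x \<in> X" "p - d x \<in> \<Lambda>"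
  shows "xof \<Lambda> X d p = x"
  unfolding xof_def
proof (rule the_equality)
  show "x \<in> X \<and> p - d x \<in> \<Lambda>" using assms by auto
next
  fix y assume y: "y \<in> X \<and> p - d y \<in> \<Lambda>"
  have fl: "full_rank_lattice \<Lambda>" using infraD[OF inf] by auto
  have "d y - d x = (p - d x) - (p - d y)" by simp
  then have "d y - d x \<in> \<Lambda>" using lat_diff[OF fl] assms y by metis
  then show "y = x" using infraD(4)[OF inf] y assms by auto
qed

lemma owner_exists:
  assumes inf: "infrastructure \<Lambda> X d fRep"
  shows "\<exists>p\<in>Xhat \<Lambda> X d. r \<in> Vhat \<Lambda> X d fRep p"
proof -
  have fl: "full_rank_lattice \<Lambda>" using infraD[OF inf] by auto
  obtain xt where xt0: "xt \<in> fRep" "d (fst xt) + snd xt - r \<in> \<Lambda>"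
    using infraD(6)[OF inf] by blast
  obtain x t where xtd: "xt = (x,t)" by (cases xt)
  have xt: "(x,t) \<in> fRep" "d x + t - r \<in> \<Lambda>" using xt0 xtd by auto
  have xX: "x \<in> X" using xt infraD(5)[OF inf] by auto
  have e: "(r - t) - d x = - (d x + t - r)" by simp
  have pl: "(r - t) - d x \<in> \<Lambda>" unfolding e using lat_neg[OF fl xt(2)] .
  then have "r - t \<in> Xhat \<Lambda> X d" unfolding Xhat_def using xX by auto
  moreover have "xof \<Lambda> X d (r - t) = x" using xof_eq[OF inf xX pl] .
  then have "r \<in> Vhat \<Lambda> X d fRep (r - t)" unfolding Vhat_def using xt(1)
    by (auto intro!: exI[of _ t])
  ultimately show ?thesis by blast
qed

lemma xof_in:
  assumes inf: "infrastructure \<Lambda> X d fRep" and "p \<in> Xhat \<Lambda> X d"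
  shows "xof \<Lambda> X d p \<in> X \<and> p - d (xof \<Lambda> X d p) \<in> \<Lambda>"
proof -
  obtain x where "x \<in> X" "p - d x \<in> \<Lambda>" using assms(2) unfolding Xhat_def by auto
  then show ?thesis using xof_eq[OF inf] by metis
qed

lemma owner_unique:
  assumes inf: "infrastructure \<Lambda> X d fRep" and p: "p \<in> Xhat \<Lambda> X d" and p': "p' \<in> Xhat \<Lambda> X d"
    and r: "r \<in> Vhat \<Lambda> X d fRep p" "r \<in> Vhat \<Lambda> X d fRep p'"
  shows "p = p'"
proof -
  have fl: "full_rank_lattice \<Lambda>" using infraD[OF inf] by auto
  define x where "x = xof \<Lambda> X d p"
  define x' where "x' = xof \<Lambda> X d p'"
  obtain t where t: "r = p + t" "(x, t) \<in> fRep" using r(1) unfolding Vhat_def x_def by auto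
  obtain t' where t': "r = p' + t'" "(x', t') \<in> fRep" using r(2) unfolding Vhat_def x'_def by auto
  have l1: "p - d x \<in> \<Lambda>" using xof_in[OF inf p] x_def by auto
  have l2: "p' - d x' \<in> \<Lambda>" using xof_in[OF inf p'] x'_def by auto
  have e: "d x + t - (d x' + t') = (p' - d x') - (p - d x)" using t t'
    by (simp add: algebra_simps)
  have "d x + t - (d x' + t') \<in> \<Lambda>" unfolding e using lat_diff[OF fl l2 l1] .
  then have "d (fst (x,t)) + snd (x,t) - (d (fst (x',t')) + snd (x',t')) \<in> \<Lambda>"
    by simp
  then have "(x,t) = (x',t')" using infraD(7)[OF inf, of "(x,t)" "(x',t')"] t t' by simp
  then show ?thesis using t t' by auto
qed




lemma cornD:
  assumes "cornered \<Lambda> X d fRep" "p \<in> Xhat \<Lambda> X d" "t \<in> Vhat \<Lambda> X d fRep p"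
    "\<And>i. p$i \<le> r$i \<and> r$i \<le> t$i"
  shows "r \<in> Vhat \<Lambda> X d fRep p"
proof -
  have "{r. (\<forall>i. p$i \<le> r$i \<and> r$i \<le> t$i)} \<subseteq> Vhat \<Lambda> X d fRep p"
    using assms(1-3) unfolding cornered_def by blast
  then show ?thesis using assms(4) by blast
qed

lemma A1D:
  assumes "assumption_A1 \<Lambda> X d fRep A" "p \<in> Xhat \<Lambda> X d" "g \<in> Vhat \<Lambda> X d fRep p"
  shows "p$i \<le> g$i \<and> g$i \<le> p$i + A"
proof -
  have "Vhat \<Lambda> X d fRep p \<subseteq> {p + u | u. \<forall>i. 0 \<le> u$i \<and> u$i \<le> A}"
    using assms(1,2) unfolding assumption_A1_def by blast
  then obtain u where "g = p + u" "\<forall>i. 0 \<le> u$i \<and> u$i \<le> A" using assms(3) by blast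
  then show ?thesis by auto
qed

lemma bad_step:
  fixes \<Lambda> :: "(real^'n) set" and g p :: "real^'n"
  assumes inf: "infrastructure \<Lambda> X d fRep" and corn: "cornered \<Lambda> X d fRep"
    and A1: "assumption_A1 \<Lambda> X d fRep A"
    and eps: "0 < \<epsilon>" and gH: "g \<notin> Heps \<Lambda> X d fRep \<epsilon>"
    and gB: "g \<in> Hbound \<Lambda> X d fRep N"
    and p: "p \<in> Xhat \<Lambda> X d" and gp: "g \<in> Vhat \<Lambda> X d fRep p"
    and gp1: "g + (\<chi> i. 1 / real N) \<in> Vhat \<Lambda> X d fRep p"
  shows False
proof -
  let ?V = "Vhat \<Lambda> X d fRep p"
  define e :: "real^'n" where "e = (\<chi> i. \<epsilon>)"
  have cb: "cbox (g - e) (g + e) \<subseteq> ?V"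
  proof (rule ccontr)
    assume "\<not> cbox (g - e) (g + e) \<subseteq> ?V"
    then have ne: "cbox (g - e) (g + e) - ?V \<noteq> {}" by blast
    have "g \<in> cbox (g - e) (g + e)" using eps unfolding mem_box_cart e_def by auto
    then have ne2: "cbox (g - e) (g + e) \<inter> ?V \<noteq> {}" using gp by blast
    have "connected (cbox (g - e) (g + e))" by (simp add: convex_connected)
    then obtain y where y: "y \<in> cbox (g - e) (g + e)" "y \<in> frontier ?V"
      using connected_Int_frontier[OF _ ne2 ne] by blast
    have yH: "y \<in> Hset \<Lambda> X d fRep" unfolding Hset_def using y(2) p by blast
    have "g = y + (g - y)" by simp
    moreover have "\<forall>i. -\<epsilon> \<le> (g - y)$i \<and> (g - y)$i \<le> \<epsilon>"
    proof
      fix i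
      have "g$i - \<epsilon> \<le> y$i \<and> y$i \<le> g$i + \<epsilon>" using y(1) unfolding mem_box_cart e_def by simp
      then show "-\<epsilon> \<le> (g - y)$i \<and> (g - y)$i \<le> \<epsilon>" by simp
    qed
    ultimately have "g \<in> Heps \<Lambda> X d fRep \<epsilon>" unfolding Heps_def using yH by blast
    then show False using gH by blast
  qed
  have "g - e \<in> cbox (g - e) (g + e)" using eps unfolding mem_box_cart e_def by simp
  then have gm: "g - e \<in> ?V" using cb by blast
  define W where "W = box (g - e) (g + (\<chi> i. 1 / real N))"
  have WV: "W \<subseteq> ?V"
  proof
    fix r assume r: "r \<in> W"
    show "r \<in> ?V"
    proof (rule cornD[OF corn p gp1])
      fix i
      have "p$i \<le> (g - e)$i" using A1D[OF A1 p gm] by blast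
      then show "p $ i \<le> r $ i \<and> r $ i \<le> (g + (\<chi> i. 1 / real N)) $ i"
        using r unfolding W_def mem_box_cart by (metis less_eq_real_def order_trans)
    qed
  qed
  have Wo: "open W" unfolding W_def by (rule open_box)
  obtain u h where uh: "g = u + h" "h \<in> Hset \<Lambda> X d fRep" "\<forall>i. - 1 / real N < u$i \<and> u$i \<le> 0"
    using gB unfolding Hbound_def by blast
  have hW: "h \<in> W" unfolding W_def mem_box_cart e_def
  proof
    fix i
    have "h$i = g$i - u$i" using uh(1) by simp
    moreover have "- 1 / real N < u$i \<and> u$i \<le> 0" using uh(3) by blast
    ultimately show "(g - (\<chi> i. \<epsilon>)) $ i < h $ i \<and> h $ i < (g + (\<chi> i. 1 / real N)) $ i"
      using eps by auto
  qed
  obtain p'' where p'': "p'' \<in> Xhat \<Lambda> X d" "h \<in> frontier (Vhat \<Lambda> X d fRep p'')"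
    using uh(2) unfolding Hset_def by blast
  have "h \<in> closure (Vhat \<Lambda> X d fRep p'')" using p''(2) unfolding frontier_def by blast
  then have "W \<inter> closure (Vhat \<Lambda> X d fRep p'') \<noteq> {}" using hW by blast
  then obtain z where z: "z \<in> W" "z \<in> Vhat \<Lambda> X d fRep p''"
    using open_Int_closure_eq_empty[OF Wo] by blast
  have "p'' = p" using owner_unique[OF inf p''(1) p z(2)] WV z(1) by blast
  moreover have "h \<in> interior ?V" using interior_maximal[OF WV Wo] hW by blast
  ultimately show False using p''(2) unfolding frontier_def by blast
qed




lemma int_card:
  fixes a l :: real
  assumes "0 \<le> l"
  shows "finite {k::int. a \<le> of_int k \<and> of_int k \<le> a + l}"
    "real (card {k::int. a \<le> of_int k \<and> of_int k \<le> a + l}) \<le> l + 1"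
proof -
  have e: "{k::int. a \<le> of_int k \<and> of_int k \<le> a + l} = {\<lceil>a\<rceil>..\<lfloor>a + l\<rfloor>}"
    by (auto simp: ceiling_le_iff le_floor_iff)
  show "finite {k::int. a \<le> of_int k \<and> of_int k \<le> a + l}" unfolding e by simp
  have c: "card {\<lceil>a\<rceil>..\<lfloor>a + l\<rfloor>} = nat (\<lfloor>a + l\<rfloor> - \<lceil>a\<rceil> + 1)" by simp
  have f1: "real_of_int \<lfloor>a + l\<rfloor> \<le> a + l" by simp
  have f2: "a \<le> real_of_int \<lceil>a\<rceil>" by simp
  define z where "z = \<lfloor>a + l\<rfloor> - \<lceil>a\<rceil> + 1"
  have zr: "real_of_int z = real_of_int \<lfloor>a + l\<rfloor> - real_of_int \<lceil>a\<rceil> + 1" unfolding z_def by simp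
  have "real (nat z) \<le> l + 1"
  proof (cases "0 \<le> z")
    case True
    then have "real (nat z) = real_of_int z" by simp
    then show ?thesis using zr f1 f2 by linarith
  next
    case False
    then show ?thesis using assms by simp
  qed
  then show "real (card {k::int. a \<le> of_int k \<and> of_int k \<le> a + l}) \<le> l + 1"
    unfolding e c z_def .
qed

lemma prod_if_one:
  fixes m :: real
  assumes "1 \<le> m"
  shows "(\<Prod>j\<in>(UNIV::'n::finite set). if j = i then 1 else m) = m ^ (CARD('n) - 1)"
proof -
  have "(\<Prod>j\<in>(UNIV::'n set). if j = i then 1 else m) =
        (if i = i then 1 else m) * (\<Prod>j\<in>UNIV - {i}. if j = i then 1 else m)"
    by (rule prod.remove) auto
  also have "\<dots> = (\<Prod>j\<in>UNIV - {i}. if j = i then 1 else m)" by simp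
  also have "\<dots> = (\<Prod>j\<in>UNIV - {i}. m)" by (rule prod.cong) auto
  also have "\<dots> = m ^ (CARD('n) - 1)" by (simp add: card_Diff_singleton)
  finally show ?thesis .
qed




lemma scale_iffs:
  fixes N p s k A :: real
  assumes "0 < N"
  shows "(p \<le> s + k / N) \<longleftrightarrow> (N * (p - s) \<le> k)"
    "(s + k / N \<le> p + A) \<longleftrightarrow> (k \<le> N * (p - s) + A * N)"
  using assms by (auto simp: field_simps)

lemma scale_iff3:
  fixes N p s k :: real
  assumes "0 < N"
  shows "(s + k / N < p + 1 / N) \<longleftrightarrow> (k < N * (p - s) + 1)"
proof -
  have e1: "N * (s + k / N) = N * s + k" and e2: "N * (p + 1 / N) = N * p + 1" using assms by (simp_all add: field_simps)
  have "(s + k / N < p + 1 / N) \<longleftrightarrow> N * (s + k / N) < N * (p + 1 / N)"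
    using mult_less_cancel_left_pos[OF assms] by blast
  also have "\<dots> \<longleftrightarrow> (k < N * (p - s) + 1)" unfolding e1 e2 by (simp add: algebra_simps)
  finally show ?thesis .
qed

lemma S1_sub:
  fixes x :: real
  shows "{k::int. x \<le> of_int k \<and> of_int k < x + 1} \<subseteq> {\<lceil>x\<rceil>}"
proof
  fix k assume k: "k \<in> {k::int. x \<le> of_int k \<and> of_int k < x + 1}"
  have "\<lceil>x\<rceil> \<le> k" using k by (simp add: ceiling_le_iff)
  moreover have "k \<le> \<lceil>x\<rceil>" using k by (simp add: le_ceiling_iff)
  ultimately show "k \<in> {\<lceil>x\<rceil>}" by simp
qed

lemma per_p:
  fixes \<Lambda> :: "(real^'n) set" and p s :: "real^'n" and F :: "(real^'n) set"
  assumes inf: "infrastructure \<Lambda> X d fRep" and corn: "cornered \<Lambda> X d fRep"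
    and A1: "assumption_A1 \<Lambda> X d fRep A"
    and eps: "0 < \<epsilon>" and N1: "N \<ge> 1"
    and F: "F \<subseteq> Ggrid N q s \<inter> Hbound \<Lambda> X d fRep N"
    and FH: "\<forall>g\<in>F. g \<notin> Heps \<Lambda> X d fRep \<epsilon>"
    and Fp: "\<forall>g\<in>F. g \<in> Vhat \<Lambda> X d fRep p"
    and p: "p \<in> Xhat \<Lambda> X d"
  shows "real (card F) \<le> real CARD('n) * (A * real N + 1) ^ (CARD('n) - 1)"
proof -
  have Apos: "A > 0" using A1 unfolding assumption_A1_def by simp
  have Npos: "real N > 0" using N1 by simp
  define c where "c g = Min (range (\<lambda>i. \<lfloor>real N * (g$i - p$i)\<rfloor>))" for g :: "real^'n"
  define f where "f g = g - (\<chi> i. real_of_int (c g) / real N)" for g :: "real^'n"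
  have cle: "c g \<le> \<lfloor>real N * (g$i - p$i)\<rfloor>" for g i
    unfolding c_def by (rule Min_le) auto
  have cin: "\<exists>i. c g = \<lfloor>real N * (g$i - p$i)\<rfloor>" for g
  proof -
    have "c g \<in> range (\<lambda>i. \<lfloor>real N * (g$i - p$i)\<rfloor>)" unfolding c_def by (rule Min_in) auto
    then show ?thesis by auto
  qed
  have fcomp: "(f g)$j = g$j - real_of_int (c g) / real N" for g j by (simp add: f_def)
  have cge: "0 \<le> c g" if "g \<in> F" for g
  proof -
    obtain i where i: "c g = \<lfloor>real N * (g$i - p$i)\<rfloor>" using cin by blast
    have "p$i \<le> g$i" using A1D[OF A1 p] Fp that by blast
    then have "0 \<le> real N * (g$i - p$i)" using Npos by simp
    then show ?thesis unfolding i by simp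
  qed
  have lowj: "p$j \<le> (f g)$j" for g j
  proof -
    have "real_of_int (c g) \<le> real N * (g$j - p$j)"
      using cle[of g j] of_int_floor_le[of "real N * (g$j - p$j)"] by (meson of_int_le_iff order_trans)
    then have "real_of_int (c g) / real N \<le> g$j - p$j" using Npos by (simp add: divide_le_eq mult.commute)
    then show ?thesis unfolding fcomp by simp
  qed
  have upj: "(f g)$j \<le> p$j + A" if "g \<in> F" for g j
  proof -
    have "0 \<le> real_of_int (c g) / real N" using cge[OF that] Npos by simp
    moreover have "g$j \<le> p$j + A" using A1D[OF A1 p] Fp that by blast
    ultimately show ?thesis unfolding fcomp by simp
  qed
  have lowi: "\<exists>i. (f g)$i < p$i + 1 / real N" for g
  proof -
    obtain i where i: "c g = \<lfloor>real N * (g$i - p$i)\<rfloor>" using cin by blast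
    have "real N * (g$i - p$i) < real_of_int (c g) + 1" unfolding i by linarith
    then have "g$i - p$i < (real_of_int (c g) + 1) / real N" using Npos by (simp add: less_divide_eq mult.commute)
    then have "(f g)$i < p$i + 1 / real N" unfolding fcomp by (simp add: add_divide_distrib)
    then show ?thesis by blast
  qed
  have key: False if g1: "g1 \<in> F" and g2: "g2 \<in> F" and fe: "f g1 = f g2" and lt: "c g1 < c g2" for g1 g2
  proof -
    have comp: "g2$j = g1$j + real_of_int (c g2 - c g1) / real N" for j
    proof -
      have "(f g1)$j = (f g2)$j" using fe by simp
      then show ?thesis unfolding fcomp by (simp add: diff_divide_distrib)
    qed
    have "1 \<le> real_of_int (c g2 - c g1)" using lt by simp
    then have ge: "1 / real N \<le> real_of_int (c g2 - c g1) / real N" using Npos by (simp add: divide_right_mono)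
    have "g1 + (\<chi> i. 1 / real N) \<in> Vhat \<Lambda> X d fRep p"
    proof (rule cornD[OF corn p])
      show "g2 \<in> Vhat \<Lambda> X d fRep p" using Fp g2 by blast
    next
      fix i
      have "p$i \<le> g1$i" using A1D[OF A1 p] Fp g1 by blast
      moreover have "0 < 1 / real N" using Npos by simp
      ultimately have a1: "p$i \<le> g1$i + 1 / real N" by linarith
      have a2: "g1$i + 1 / real N \<le> g2$i" using comp[of i] ge by linarith
      show "p $ i \<le> (g1 + (\<chi> i. 1 / real N)) $ i \<and> (g1 + (\<chi> i. 1 / real N)) $ i \<le> g2 $ i"
        using a1 a2 by simp
    qed
    then show False
      using bad_step[OF inf corn A1 eps _ _ p _] g1 F FH Fp by blast
  qed
  have injf: "inj_on f F"
  proof (rule inj_onI)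
    fix g1 g2 assume g1: "g1 \<in> F" and g2: "g2 \<in> F" and fe: "f g1 = f g2"
    have ceq: "c g1 = c g2" using key[OF g1 g2 fe] key[OF g2 g1 fe[symmetric]] by fastforce
    show "g1 = g2"
    proof (rule vec_eq_iff[THEN iffD2], rule allI)
      fix j
      have "(f g1)$j = (f g2)$j" using fe by simp
      then show "g1$j = g2$j" unfolding fcomp ceq by simp
    qed
  qed
  define gm where "gm k = s + (\<chi> j. real_of_int (k j) / real N)" for k :: "'n \<Rightarrow> int"
  define S where "S j = {k::int. real N * (p$j - s$j) \<le> of_int k \<and> of_int k \<le> real N * (p$j - s$j) + A * real N}" for j
  define S1 where "S1 j = {k::int. real N * (p$j - s$j) \<le> of_int k \<and> of_int k < real N * (p$j - s$j) + 1}" for j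
  define B where "B i j = (if j = i then S1 j else S j)" for i j
  define T where "T i = gm ` (PiE UNIV (B i))" for i
  have img: "f ` F \<subseteq> (\<Union>i. T i)"
  proof
    fix y assume "y \<in> f ` F"
    then obtain g where g: "g \<in> F" "y = f g" by blast
    obtain v :: "'n \<Rightarrow> nat" where v: "g = s + (\<chi> i. real (v i) / real N)"
      using g(1) F unfolding Ggrid_def by blast
    define k where "k j = int (v j) - c g" for j
    have yk: "y = gm k"
      unfolding g(2) gm_def k_def vec_eq_iff fcomp using v by (simp add: diff_divide_distrib)
    have yj: "y$j = s$j + real_of_int (k j) / real N" for j unfolding yk gm_def by simp
    obtain i where i: "(f g)$i < p$i + 1 / real N" using lowi by blast
    have "k \<in> PiE UNIV (B i)"
      unfolding PiE_UNIV_domain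
    proof (rule Pi_I)
      fix j
      have l: "p$j \<le> s$j + real_of_int (k j) / real N" using lowj[of j g] yj[of j] g(2) by simp
      have u: "s$j + real_of_int (k j) / real N \<le> p$j + A" using upj[OF g(1), of j] yj[of j] g(2) by simp
      show "k j \<in> B i j"
      proof (cases "j = i")
        case True
        have "s$j + real_of_int (k j) / real N < p$j + 1 / real N" using i yj[of j] g(2) True by simp
        then show ?thesis using l True unfolding B_def S1_def scale_iffs[OF Npos] scale_iff3[OF Npos] by simp
      next
        case False
        then show ?thesis using l u unfolding B_def S_def scale_iffs[OF Npos] by simp
      qed
    qed
    then show "y \<in> (\<Union>i. T i)" unfolding T_def yk by blast
  qed
  have finS: "finite (S j)" and cardS: "real (card (S j)) \<le> A * real N + 1" for j
    unfolding S_def using int_card[of "A * real N" "real N * (p$j - s$j)"] Apos Npos by auto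
  have finS1: "finite (S1 j)" and cardS1: "card (S1 j) \<le> 1" for j
  proof -
    have "S1 j \<subseteq> {\<lceil>real N * (p$j - s$j)\<rceil>}" unfolding S1_def by (rule S1_sub)
    moreover have "finite {\<lceil>real N * (p$j - s$j)\<rceil>}" by simp
    ultimately show "finite (S1 j)" by (rule finite_subset)
    from card_mono[OF \<open>finite {\<lceil>real N * (p$j - s$j)\<rceil>}\<close> \<open>S1 j \<subseteq> _\<close>]
    show "card (S1 j) \<le> 1" by simp
  qed
  have finB: "finite (B i j)" for i j unfolding B_def using finS finS1 by simp
  have cardT: "real (card (T i)) \<le> (A * real N + 1) ^ (CARD('n) - 1)" for i
  proof -
    have "card (T i) \<le> card (PiE UNIV (B i))" unfolding T_def by (rule card_image_le) (simp add: finite_PiE finB)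
    also have "\<dots> = (\<Prod>j\<in>UNIV. card (B i j))" by (simp add: card_PiE)
    finally have "real (card (T i)) \<le> (\<Prod>j\<in>UNIV. real (card (B i j)))" by (metis of_nat_le_iff of_nat_prod)
    also have "\<dots> \<le> (\<Prod>j\<in>(UNIV::'n set). if j = i then 1 else A * real N + 1)"
    proof (rule prod_mono)
      fix j :: 'n
      show "0 \<le> real (card (B i j)) \<and> real (card (B i j)) \<le> (if j = i then 1 else A * real N + 1)"
        using cardS[of j] cardS1[of j] unfolding B_def by auto
    qed
    also have "\<dots> = (A * real N + 1) ^ (CARD('n) - 1)"
      by (rule prod_if_one) (use Apos Npos in simp)
    finally show ?thesis .
  qed
  have finT: "finite (\<Union>i. T i)" unfolding T_def by (simp add: finite_PiE finB)
  have "card F = card (f ` F)" using card_image[OF injf] by simp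
  also have "\<dots> \<le> card (\<Union>i. T i)" by (rule card_mono[OF finT img])
  also have "\<dots> \<le> (\<Sum>i\<in>UNIV. card (T i))" by (rule card_UN_le) simp
  finally have "real (card F) \<le> (\<Sum>i\<in>UNIV. real (card (T i)))" by (metis of_nat_le_iff of_nat_sum)
  also have "\<dots> \<le> (\<Sum>i\<in>(UNIV::'n set). (A * real N + 1) ^ (CARD('n) - 1))" by (rule sum_mono) (rule cardT)
  also have "\<dots> = real CARD('n) * (A * real N + 1) ^ (CARD('n) - 1)" by simp
  finally show ?thesis .
qed




lemma cover1:
  fixes C y L :: real and J :: nat
  assumes C: "0 < C" and y: "0 \<le> y" "y \<le> L" and L: "0 < L" and J: "J = nat \<lceil>L / C\<rceil>"
  shows "min (nat \<lfloor>y / C\<rfloor>) (J - 1) < J \<and> C * real (min (nat \<lfloor>y / C\<rfloor>) (J - 1)) \<le> y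
         \<and> y \<le> C * real (min (nat \<lfloor>y / C\<rfloor>) (J - 1)) + C"
proof -
  have LC: "0 < L / C" using C L by simp
  have J1: "1 \<le> J" unfolding J using LC by (simp add: le_nat_iff)
  have JL: "L / C \<le> real J" unfolding J using LC by (simp add: le_of_int_ceiling)
  then have JL': "L \<le> C * real J" using C by (simp add: divide_le_eq mult.commute)
  define f where "f = nat \<lfloor>y / C\<rfloor>"
  have yC: "0 \<le> y / C" using y C by simp
  have rf: "real f = real_of_int \<lfloor>y / C\<rfloor>" unfolding f_def using yC by simp
  have f1: "real f \<le> y / C" unfolding rf by simp
  have f2: "y / C < real f + 1" unfolding rf by linarith
  have Cf1: "C * real f \<le> y" using f1 C by (simp add: le_divide_eq mult.commute)
  have Cf2: "y < C * real f + C" using f2 C by (simp add: divide_less_eq algebra_simps)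
  show ?thesis
  proof (cases "f \<le> J - 1")
    case True
    then have m: "min f (J - 1) = f" by simp
    show ?thesis unfolding f_def[symmetric] m using True J1 Cf1 Cf2 by simp
  next
    case False
    then have m: "min f (J - 1) = J - 1" by simp
    have rJ: "real (J - 1) = real J - 1" using J1 by simp
    have "real (J - 1) \<le> real f" using False by simp
    then have "C * real (J - 1) \<le> C * real f" using C by simp
    then show ?thesis unfolding f_def[symmetric] m using J1 Cf1 JL' y(2) rJ
      by (simp add: algebra_simps)
  qed
qed




lemma Ggrid_bounds:
  fixes s g :: "real^'n"
  assumes "g \<in> Ggrid N q s" "N \<ge> 1"
  shows "s$i \<le> g$i \<and> g$i \<le> s$i + real q"
proof -
  obtain v :: "'n \<Rightarrow> nat" where v: "g = s + (\<chi> i. real (v i) / real N)" "\<forall>i. v i < q * N"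
    using assms(1) unfolding Ggrid_def by blast
  have Npos: "0 < real N" using assms(2) by simp
  have "real (v i) \<le> real q * real N" using v(2)[rule_format, of i] by (metis less_imp_le of_nat_le_iff of_nat_mult)
  then have "real (v i) / real N \<le> real q" using Npos by (simp add: divide_le_eq)
  moreover have "0 \<le> real (v i) / real N" by simp
  ultimately show ?thesis using v(1) by simp
qed

lemma count_P:
  fixes \<Lambda> :: "(real^'n) set" and s :: "real^'n"
  assumes A1: "assumption_A1 \<Lambda> X d fRep A" and A2: "assumption_A2 \<Lambda> X d C D"
    and N1: "N \<ge> 1" and q1: "q \<ge> 1"
    and P: "P = {p \<in> Xhat \<Lambda> X d. \<exists>g \<in> Ggrid N q s. g \<in> Vhat \<Lambda> X d fRep p}"
  shows "finite P \<and> real (card P) \<le> ((real q + A + C) / C) ^ CARD('n) * D"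
proof -
  have Apos: "0 < A" using A1 unfolding assumption_A1_def by simp
  have Cpos: "0 < C" and Dpos: "0 < D" using A2 unfolding assumption_A2_def by simp_all
  define L where "L = real q + A"
  have Lpos: "0 < L" unfolding L_def using Apos by simp
  define J where "J = nat \<lceil>L / C\<rceil>"
  define I where "I = PiE (UNIV::'n set) (\<lambda>_. {..<J})"
  define r where "r j = (\<chi> i. s$i - A + C * real (j i))" for j :: "'n \<Rightarrow> nat"
  define Q where "Q j = {r j + u | u. \<forall>i. 0 \<le> u$i \<and> u$i \<le> C} \<inter> Xhat \<Lambda> X d" for j
  have Q: "finite (Q j) \<and> real (card (Q j)) \<le> D" for j
    using A2 unfolding assumption_A2_def Let_def Q_def by blast
  have finI: "finite I" unfolding I_def by (simp add: finite_PiE)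
  have cardI: "card I = J ^ CARD('n)" unfolding I_def by (simp add: card_PiE)
  have sub: "P \<subseteq> (\<Union>j\<in>I. Q j)"
  proof
    fix p assume "p \<in> P"
    then obtain g where p: "p \<in> Xhat \<Lambda> X d" and g: "g \<in> Ggrid N q s" "g \<in> Vhat \<Lambda> X d fRep p"
      unfolding P by blast
    define y where "y i = p$i - s$i + A" for i
    have yb: "0 \<le> y i \<and> y i \<le> L" for i
      using A1D[OF A1 p g(2), of i] Ggrid_bounds[OF g(1) N1, of i] unfolding y_def L_def by linarith
    define j where "j i = min (nat \<lfloor>y i / C\<rfloor>) (J - 1)" for i
    have jp: "j i < J \<and> C * real (j i) \<le> y i \<and> y i \<le> C * real (j i) + C" for i
      unfolding j_def using cover1[OF Cpos _ _ Lpos J_def] yb by blast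
    have "j \<in> I" unfolding I_def PiE_UNIV_domain using jp by auto
    moreover have "p \<in> Q j"
    proof -
      have "p = r j + (p - r j)" by simp
      moreover have "\<forall>i. 0 \<le> (p - r j)$i \<and> (p - r j)$i \<le> C"
        using jp unfolding r_def y_def by (simp add: algebra_simps)
      ultimately show ?thesis unfolding Q_def using p by blast
    qed
    ultimately show "p \<in> (\<Union>j\<in>I. Q j)" by blast
  qed
  have finU: "finite (\<Union>j\<in>I. Q j)" using finI Q by blast
  have "card P \<le> card (\<Union>j\<in>I. Q j)" by (rule card_mono[OF finU sub])
  also have "\<dots> \<le> (\<Sum>j\<in>I. card (Q j))" by (rule card_UN_le[OF finI])
  finally have "real (card P) \<le> (\<Sum>j\<in>I. real (card (Q j)))" by (metis of_nat_le_iff of_nat_sum)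
  also have "\<dots> \<le> (\<Sum>j\<in>I. D)" by (rule sum_mono) (use Q in blast)
  also have "\<dots> = real J ^ CARD('n) * D" using cardI by simp
  also have "\<dots> \<le> ((real q + A + C) / C) ^ CARD('n) * D"
  proof -
    have "real J = real_of_int \<lceil>L / C\<rceil>" unfolding J_def using Lpos Cpos by simp
    also have "\<dots> \<le> L / C + 1" by linarith
    also have "\<dots> = (real q + A + C) / C" unfolding L_def using Cpos by (simp add: field_simps)
    finally have "real J \<le> (real q + A + C) / C" .
    then have "real J ^ CARD('n) \<le> ((real q + A + C) / C) ^ CARD('n)" by (rule power_mono) simp
    then show ?thesis using Dpos by simp
  qed
  finally show ?thesis using finU sub finite_subset by blast
qed




lemma card_Ggrid:
  fixes s :: "real^'n"
  assumes "N \<ge> 1"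
  shows "finite (Ggrid N q s) \<and> card (Ggrid N q s) = (q * N) ^ CARD('n)"
proof -
  define gm where "gm v = s + (\<chi> i. real (v i) / real N)" for v :: "'n \<Rightarrow> nat"
  define V where "V = PiE (UNIV::'n set) (\<lambda>_. {..<q * N})"
  have G: "Ggrid N q s = gm ` V" unfolding Ggrid_def gm_def V_def PiE_UNIV_domain by auto
  have inj: "inj_on gm V"
  proof (rule inj_onI)
    fix v w assume "gm v = gm w"
    then have "real (v i) / real N = real (w i) / real N" for i
      unfolding gm_def by (metis (no_types, lifting) add_left_cancel vec_lambda_beta)
    then show "v = w" using assms by (auto simp: fun_eq_iff)
  qed
  have "finite V" unfolding V_def by (simp add: finite_PiE)
  moreover have "card V = (q * N) ^ CARD('n)" unfolding V_def by (simp add: card_PiE)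
  ultimately show ?thesis unfolding G using card_image[OF inj] by simp
qed

lemma alg_id:
  fixes C N q R D nn E :: real
  assumes "0 < C" "0 < N" "0 < q"
  shows "(R / C) ^ Suc k * D * (nn * (N * E) ^ k) = (1 / N) * (nn * D * R ^ Suc k * E ^ k) / (C * q) ^ Suc k * (q * N) ^ Suc k"
  using assms by (simp add: power_mult_distrib power_divide field_simps)

theorem proposition5p1:
  fixes \<Lambda> :: "(real^'n) set" and X :: "'x set" and d :: "'x \<Rightarrow> real^'n"
    and fRep :: "('x \<times> (real^'n)) set"
    and A C D \<epsilon> :: real and N q L :: nat and s :: "real^'n"
  assumes "infrastructure \<Lambda> X d fRep"
    and "cornered \<Lambda> X d fRep"
    and "assumption_A1 \<Lambda> X d fRep A"
    and "assumption_A2 \<Lambda> X d C D"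
    and "N \<ge> 1" and "q \<ge> 1" and "L \<ge> 1"
    and "0 < \<epsilon>" and "\<epsilon> \<le> 1 / (2 * real N * real L)"
    and "s \<in> Sgrid N L"
    and "Heps \<Lambda> X d fRep \<epsilon> \<inter> Ggrid N q s = {}"
  shows "real (card (Ggrid N q s - Hbound \<Lambda> X d fRep N)) / real (card (Ggrid N q s))
           \<ge> 1 - (1 / real N) *
               (real CARD('n) * D * (real q + 1 + A + C) ^ CARD('n) * (A + 2 / real N) ^ (CARD('n) - 1))
               / (C * real q) ^ CARD('n)"
proof -
  note inf = assms(1) and corn = assms(2) and A1 = assms(3) and A2 = assms(4)
    and N1 = assms(5) and q1 = assms(6) and eps = assms(8) and disj = assms(11)
  let ?G = "Ggrid N q s" and ?Hb = "Hbound \<Lambda> X d fRep N"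
  let ?V = "Vhat \<Lambda> X d fRep"
  define n where "n = CARD('n)"
  have n1: "1 \<le> n" unfolding n_def by simp
  have Apos: "0 < A" using A1 unfolding assumption_A1_def by simp
  have Cpos: "0 < C" and Dpos: "0 < D" using A2 unfolding assumption_A2_def by simp_all
  have Npos: "0 < real N" using N1 by simp
  have qpos: "0 < real q" using q1 by simp
  define P where "P = {p \<in> Xhat \<Lambda> X d. \<exists>g \<in> ?G. g \<in> ?V p}"
  define Bad where "Bad = ?G \<inter> ?Hb"
  define m where "m = A * real N + 1"
  have mpos: "0 \<le> m" unfolding m_def using Apos Npos by simp
  have cP: "finite P \<and> real (card P) \<le> ((real q + A + C) / C) ^ n * D"
    using count_P[OF A1 A2 N1 q1 P_def] unfolding n_def .
  have cG: "finite ?G \<and> card ?G = (q * N) ^ n" using card_Ggrid[OF N1] unfolding n_def .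
  have BadU: "Bad = (\<Union>p\<in>P. {g \<in> Bad. g \<in> ?V p})"
  proof
    show "Bad \<subseteq> (\<Union>p\<in>P. {g \<in> Bad. g \<in> ?V p})"
    proof
      fix g assume g: "g \<in> Bad"
      obtain p where "p \<in> Xhat \<Lambda> X d" "g \<in> ?V p" using owner_exists[OF inf] by blast
      then show "g \<in> (\<Union>p\<in>P. {g \<in> Bad. g \<in> ?V p})" using g unfolding P_def Bad_def by blast
    qed
  qed blast
  have perp: "real (card {g \<in> Bad. g \<in> ?V p}) \<le> real n * m ^ (n - 1)" if p: "p \<in> P" for p
    unfolding n_def m_def
  proof (rule per_p[OF inf corn A1 eps N1])
    show "{g \<in> Bad. g \<in> ?V p} \<subseteq> ?G \<inter> ?Hb" unfolding Bad_def by blast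
    show "\<forall>g\<in>{g \<in> Bad. g \<in> ?V p}. g \<notin> Heps \<Lambda> X d fRep \<epsilon>" using disj unfolding Bad_def by blast
    show "\<forall>g\<in>{g \<in> Bad. g \<in> ?V p}. g \<in> ?V p" by blast
    show "p \<in> Xhat \<Lambda> X d" using p unfolding P_def by blast
  qed
  have "card Bad = card (\<Union>p\<in>P. {g \<in> Bad. g \<in> ?V p})" using arg_cong[of _ _ card, OF BadU] .
  also have "\<dots> \<le> (\<Sum>p\<in>P. card {g \<in> Bad. g \<in> ?V p})"
    by (rule card_UN_le) (use cP in simp)
  finally have "real (card Bad) \<le> real (\<Sum>p\<in>P. card {g \<in> Bad. g \<in> ?V p})"
    by (simp only: of_nat_le_iff)
  also have "\<dots> = (\<Sum>p\<in>P. real (card {g \<in> Bad. g \<in> ?V p}))" by (rule of_nat_sum)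
  also have "\<dots> \<le> (\<Sum>p\<in>P. real n * m ^ (n - 1))" by (rule sum_mono) (rule perp)
  also have "\<dots> = real (card P) * (real n * m ^ (n - 1))" by simp
  also have "\<dots> \<le> ((real q + A + C) / C) ^ n * D * (real n * m ^ (n - 1))"
    using cP mpos by (intro mult_right_mono) auto
  also have "\<dots> \<le> ((real q + 1 + A + C) / C) ^ n * D * (real n * (real N * (A + 2 / real N)) ^ (n - 1))"
  proof -
    have "0 \<le> (real q + A + C) / C" using qpos Apos Cpos by simp
    moreover have "(real q + A + C) / C \<le> (real q + 1 + A + C) / C" using Cpos by (simp add: divide_right_mono)
    ultimately have h1: "((real q + A + C) / C) ^ n \<le> ((real q + 1 + A + C) / C) ^ n" by (simp add: power_mono)
    have "m \<le> real N * (A + 2 / real N)" unfolding m_def using Npos by (simp add: algebra_simps)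
    then have h2: "m ^ (n - 1) \<le> (real N * (A + 2 / real N)) ^ (n - 1)" using mpos by (rule power_mono)
    have "0 \<le> ((real q + A + C) / C) ^ n" using qpos Apos Cpos by simp
    then have a1: "((real q + A + C) / C) ^ n * D \<le> ((real q + 1 + A + C) / C) ^ n * D"
      using h1 Dpos by (simp add: mult_right_mono)
    have a2: "real n * m ^ (n - 1) \<le> real n * (real N * (A + 2 / real N)) ^ (n - 1)"
      using h2 by (simp add: mult_left_mono)
    have a3: "0 \<le> ((real q + 1 + A + C) / C) ^ n * D" using qpos Apos Cpos Dpos by simp
    have a4: "0 \<le> real n * m ^ (n - 1)" using mpos by simp
    show ?thesis using mult_mono[OF a1 a2 a3 a4] .
  qed
  finally have KB: "real (card Bad) \<le> ((real q + 1 + A + C) / C) ^ n * D * (real n * (real N * (A + 2 / real N)) ^ (n - 1))" .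
  define Z where "Z = (1 / real N) * (real n * D * (real q + 1 + A + C) ^ n * (A + 2 / real N) ^ (n - 1)) / (C * real q) ^ n"
  define M where "M = (real q * real N) ^ n"
  have Mpos: "0 < M" unfolding M_def using qpos Npos by simp
  obtain n' where n': "n = Suc n'" using n1 by (cases n) auto
  have "((real q + 1 + A + C) / C) ^ n * D * (real n * (real N * (A + 2 / real N)) ^ (n - 1)) = Z * M"
    unfolding Z_def M_def n' using alg_id[OF Cpos Npos qpos] by simp
  with KB have KZ: "real (card Bad) \<le> Z * M" by simp
  have cardG: "real (card ?G) = M" unfolding M_def using cG by simp
  have cD: "card (?G - ?Hb) = card ?G - card Bad" unfolding Bad_def
    by (rule card_Diff_subset_Int) (use cG in simp)
  have BG: "card Bad \<le> card ?G" unfolding Bad_def using cG card_mono[of ?G "?G \<inter> ?Hb"] by blast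
  have "real (card (?G - ?Hb)) / real (card ?G) = (M - real (card Bad)) / M"
    unfolding cD of_nat_diff[OF BG] cardG ..
  also have "\<dots> = 1 - real (card Bad) / M" using Mpos by (simp add: field_simps)
  also have "\<dots> \<ge> 1 - Z" using KZ Mpos by (simp add: divide_le_eq)
  finally show ?thesis unfolding Z_def n_def .
qed


end
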